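(* Let $n,d\in\mathbb{N}$ with $1\le d$ and $d+1\le n$, and let $\mathbf{X}=\{\mathbf{x}_1,\dots,\mathbf{x}_m\}\subseteq\mathbb{B}^n\setminus\{\mathbf{0}\}$ be any dataset of nonzero boolean vectors. Let $\tilde{\mathbf{K}}^{(d)}$ and $\tilde{\mathbf{K}}^{(d+1)}$ be the $m\times m$ matrices with entries $\tilde\kappa_\vee^d(\mathbf{x}_i,\mathbf{x}_j)$ and $\tilde\kappa_\vee^{d+1}(\mathbf{x}_i,\mathbf{x}_j)$. Then $\tilde\kappa_\vee^d(\mathbf{x}_i,\mathbf{x}_j)^2\le\tilde\kappa_\vee^{d+1}(\mathbf{x}_i,\mathbf{x}_j)^2$ for all $i,j$, and consequently $\mathcal{C}(\tilde{\mathbf{K}}^{(d)})\ge\mathcal{C}(\tilde{\mathbf{K}}^{(d+1)})$. In other words, $\tilde\kappa_\vee^{d+1}$ is more general than $\tilde\kappa_\vee^d$.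
   Context: $\mathbb{B}=\{0,1\}$. $H:\mathbb{R}\to\mathbb{B}$ is the Heaviside function, $H(t)=1$ if $t>0$ and $0$ otherwise. Let $\mathbb{B}_d=\{\mathbf{b}\in\mathbb{B}^n:\|\mathbf{b}\|_1=d\}$. The Disjunctive kernel (D-Kernel) of arity $d$ is $\kappa_\vee^d(\mathbf{x},\mathbf{z})=\langle\phi_\vee^d(\mathbf{x}),\phi_\vee^d(\mathbf{z})\rangle$ where $\phi_\vee^d(\mathbf{x})=(H(\langle\mathbf{x},\mathbf{b}\rangle))_{\mathbf{b}\in\mathbb{B}_d}$ (each feature is the disjunction of the $d$ variables selected by $\mathbf{b}$). Equivalently, writing $|\mathbf{x}|=\langle\mathbf{x},\mathbf{x}\rangle$ for the number of ones, $\kappa_\vee^d(\mathbf{x},\mathbf{z})=\binom{n}{d}-\binom{n-|\mathbf{x}|}{d}-\binom{n-|\mathbf{z}|}{d}+\binom{n-|\mathbf{x}|-|\mathbf{z}|+\langle\mathbf{x},\mathbf{z}\rangle}{d}$. For a kernel $\kappa$, its normalized version is $\tilde\kappa(\mathbf{x},\mathbf{z})=\kappa(\mathbf{x},\mathbf{z})/\sqrt{\kappa(\mathbf{x},\mathbf{x})\kappa(\mathbf{z},\mathbf{z})}$. The spectral ratio of a positive semidefinite matrix $\mathbf{K}\in\mathbb{R}^{m\times m}$ is $\mathcal{C}(\mathbf{K})=\sum_i\mathbf{K}_{ii}/\sqrt{\sum_{i,j}\mathbf{K}_{ij}^2}$. A kernel $\kappa_1$ is said to be more general than $\kappa_2$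 if $\mathcal{C}(\mathbf{K}^{(1)}_{\mathbf{X}})\le\mathcal{C}(\mathbf{K}^{(2)}_{\mathbf{X}})$ for the kernel matrices on the datasets under consideration. *)

theory Defs
  imports Complex_Main
begin

definition boolvec :: "nat \<Rightarrow> (nat \<Rightarrow> nat) \<Rightarrow> bool" where
  "boolvec n x \<longleftrightarrow> (\<forall>i<n. x i \<in> {0,1}) \<and> (\<forall>i\<ge>n. x i = 0)"

definition ip :: "nat \<Rightarrow> (nat \<Rightarrow> nat) \<Rightarrow> (nat \<Rightarrow> nat) \<Rightarrow> nat" where
  "ip n x z = (\<Sum>i<n. x i * z i)"

definition heaviside :: "real \<Rightarrow> real" where
  "heaviside t = (if t > 0 then 1 else 0)"

definition Bd :: "nat \<Rightarrow> nat \<Rightarrow> (nat \<Rightarrow> nat) set" where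
  "Bd n d = {b. boolvec n b \<and> (\<Sum>i<n. b i) = d}"

text \<open>Disjunctive kernel via its feature map.\<close>
definition dkernel :: "nat \<Rightarrow> nat \<Rightarrow> (nat \<Rightarrow> nat) \<Rightarrow> (nat \<Rightarrow> nat) \<Rightarrow> real" where
  "dkernel n d x z = (\<Sum>b\<in>Bd n d. heaviside (real (ip n x b)) * heaviside (real (ip n z b)))"

definition normalize_kernel ::
  "(('a \<Rightarrow> 'a \<Rightarrow> real)) \<Rightarrow> 'a \<Rightarrow> 'a \<Rightarrow> real" where
  "normalize_kernel k x z = k x z / sqrt (k x x * k z z)"

definition spectral_ratio :: "nat \<Rightarrow> (nat \<Rightarrow> nat \<Rightarrow> real) \<Rightarrow> real" where
  "spectral_ratio m K = (\<Sum>i<m. K i i) / sqrt (\<Sum>i<m. \<Sum>j<m. (K i j)\<^sup>2)"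

end

theory Submission
  imports Defs
begin

definition ind :: "nat set \<Rightarrow> nat \<Rightarrow> nat" where
  "ind S i = (if i \<in> S then 1 else 0)"

lemma count_restricted:
  assumes E: "E \<subseteq> {..<n}"
  shows "card {b. boolvec n b \<and> (\<Sum>i<n. b i) = d \<and> (\<forall>i<n. i \<notin> E \<longrightarrow> b i = 0)}
         = card E choose d"
proof -
  have fE: "finite E" using E finite_subset by blast
  have eq: "{b. boolvec n b \<and> (\<Sum>i<n. b i) = d \<and> (\<forall>i<n. i \<notin> E \<longrightarrow> b i = 0)}
        = ind ` {S. S \<subseteq> E \<and> card S = d}"
  proof (rule set_eqI, rule iffI)
    fix b assume b: "b \<in> {b. boolvec n b \<and> (\<Sum>i<n. b i) = d \<and> (\<forall>i<n. i \<notin> E \<longrightarrow> b i = 0)}"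
    let ?S = "{i. i < n \<and> b i = 1}"
    have bv: "boolvec n b" and bs: "(\<Sum>i<n. b i) = d" and bz: "\<forall>i<n. i \<notin> E \<longrightarrow> b i = 0"
      using b by auto
    have "b = ind ?S"
      using bv unfolding boolvec_def ind_def by (auto simp: fun_eq_iff) (metis not_le)
    moreover have "?S \<subseteq> E" using bz by auto
    moreover have "card ?S = d"
    proof -
      have "(\<Sum>i<n. b i) = (\<Sum>i<n. if i \<in> ?S then 1 else 0)"
        using bv unfolding boolvec_def by (intro sum.cong) auto
      also have "\<dots> = card ({..<n} \<inter> ?S)"
        by (simp add: sum.If_cases Int_def conj_commute)
      also have "{..<n} \<inter> ?S = ?S" by auto
      finally show ?thesis using bs by simp
    qed
    ultimately show "b \<in> ind ` {S. S \<subseteq> E \<and> card S = d}" by blast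
  next
    fix b assume "b \<in> ind ` {S. S \<subseteq> E \<and> card S = d}"
    then obtain S where S: "S \<subseteq> E" "card S = d" and bS: "b = ind S" by blast
    have "boolvec n b" using S E bS unfolding boolvec_def ind_def by auto
    moreover have "(\<Sum>i<n. b i) = d"
    proof -
      have "(\<Sum>i<n. b i) = card ({..<n} \<inter> S)"
        unfolding bS ind_def by (simp add: sum.If_cases)
      also have "{..<n} \<inter> S = S" using S E by auto
      finally show ?thesis using S by simp
    qed
    moreover have "\<forall>i<n. i \<notin> E \<longrightarrow> b i = 0" using S bS unfolding ind_def by auto
    ultimately show "b \<in> {b. boolvec n b \<and> (\<Sum>i<n. b i) = d \<and> (\<forall>i<n. i \<notin> E \<longrightarrow> b i = 0)}"
      by blast
  qed
  have inj: "inj_on ind {S. S \<subseteq> E \<and> card S = d}"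
  proof (rule inj_onI)
    fix S T assume "ind S = ind T"
    then have "\<forall>i. (i \<in> S) = (i \<in> T)" unfolding ind_def by (metis one_neq_zero)
    then show "S = T" by blast
  qed
  show ?thesis unfolding eq using card_image[OF inj] n_subsets[OF fE] by simp
qed

lemma finite_boolvec: "finite {b. boolvec n b}"
proof -
  have "{b. boolvec n b} \<subseteq> ind ` Pow {..<n}"
  proof
    fix b assume "b \<in> {b. boolvec n b}"
    then have bv: "boolvec n b" by simp
    have "b = ind {i. i < n \<and> b i = 1}"
      using bv unfolding boolvec_def ind_def by (auto simp: fun_eq_iff) (metis not_le)
    then show "b \<in> ind ` Pow {..<n}" by blast
  qed
  then show ?thesis by (rule finite_subset) simp
qed

definition supp :: "nat \<Rightarrow> (nat \<Rightarrow> nat) \<Rightarrow> nat set" where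
  "supp n x = {i. i < n \<and> x i = 1}"

lemma supp_sub: "supp n x \<subseteq> {..<n}" unfolding supp_def by auto

lemma card_rest:
  assumes "A \<subseteq> {..<n}"
  shows "card {b \<in> Bd n d. \<forall>i<n. i \<in> A \<longrightarrow> b i = 0} = (n - card A) choose d"
proof -
  have "{b \<in> Bd n d. \<forall>i<n. i \<in> A \<longrightarrow> b i = 0}
     = {b. boolvec n b \<and> (\<Sum>i<n. b i) = d \<and> (\<forall>i<n. i \<notin> ({..<n} - A) \<longrightarrow> b i = 0)}"
    unfolding Bd_def by auto
  moreover have "card ({..<n} - A) = n - card A"
    using assms by (simp add: card_Diff_subset finite_subset)
  ultimately show ?thesis using count_restricted[of "{..<n} - A" n d] by simp
qed

lemma heav_ip:
  assumes "boolvec n x"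
  shows "heaviside (real (ip n x b)) = 1 - (if (\<forall>i<n. i \<in> supp n x \<longrightarrow> b i = 0) then 1 else 0)"
proof -
  have "(ip n x b = 0) = (\<forall>i<n. i \<in> supp n x \<longrightarrow> b i = 0)"
    using assms unfolding ip_def supp_def boolvec_def by (auto, force)
  then show ?thesis unfolding heaviside_def by auto
qed

lemma dkernel_formula:
  assumes x: "boolvec n x" and z: "boolvec n z"
  shows "dkernel n d x z = real (n choose d) - real ((n - card (supp n x)) choose d)
     - real ((n - card (supp n z)) choose d) + real ((n - card (supp n x \<union> supp n z)) choose d)"
proof -
  define Mx where "Mx b = (\<forall>i<n. i \<in> supp n x \<longrightarrow> b i = 0)" for b :: "nat \<Rightarrow> nat"
  define Mz where "Mz b = (\<forall>i<n. i \<in> supp n z \<longrightarrow> b i = 0)" for b :: "nat \<Rightarrow> nat"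
  have fin: "finite (Bd n d)" unfolding Bd_def
    by (rule finite_subset[OF _ finite_boolvec[of n]]) auto
  have "dkernel n d x z = (\<Sum>b\<in>Bd n d. 1 - (if Mx b then 1 else 0) - (if Mz b then 1 else 0)
          + (if Mx b \<and> Mz b then 1 else 0))"
    unfolding dkernel_def heav_ip[OF x] heav_ip[OF z] Mx_def[symmetric] Mz_def[symmetric]
    by (intro sum.cong) auto
  also have "\<dots> = real (card (Bd n d)) - real (card {b \<in> Bd n d. Mx b})
      - real (card {b \<in> Bd n d. Mz b}) + real (card {b \<in> Bd n d. Mx b \<and> Mz b})"
    using fin by (simp add: sum.distrib sum_subtractf sum.If_cases Int_def conj_commute)
  also have "card (Bd n d) = n choose d"
    using card_rest[of "{}" n d] by simp
  also have "card {b \<in> Bd n d. Mx b} = (n - card (supp n x)) choose d"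
    unfolding Mx_def by (rule card_rest[OF supp_sub])
  also have "card {b \<in> Bd n d. Mz b} = (n - card (supp n z)) choose d"
    unfolding Mz_def by (rule card_rest[OF supp_sub])
  also have "{b \<in> Bd n d. Mx b \<and> Mz b} = {b \<in> Bd n d. \<forall>i<n. i \<in> supp n x \<union> supp n z \<longrightarrow> b i = 0}"
    unfolding Mx_def Mz_def by auto
  also have "card \<dots> = (n - card (supp n x \<union> supp n z)) choose d"
    by (rule card_rest) (use supp_sub in auto)
  finally show ?thesis .
qed

lemma step_alg_id: fixes N k d T T' c c1 c' :: real
 assumes "(N-k)*c1 = (N-k-d)*c" "(d+1)*c' = (N-k-d)*c" "(d+1)*T' = (N-d)*T"
 shows "(N-k)*(k*c*(T-c1) - (k+1)*c1*(T-c)) = (d+1)*c*(k*T - T' + c')"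
  using assms by algebra

lemma step_alg: fixes N k d T T' c c1 c' :: real
 assumes "(N-k)*c1 = (N-k-d)*c" "(d+1)*c' = (N-k-d)*c" "(d+1)*T' = (N-d)*T"
   "T' \<le> c' + k*T" "c \<ge> 0" "N - k > 0" "d \<ge> 0"
 shows "(k+1)*c1*(T-c) \<le> k*c*(T-c1)"
proof -
  have "(N-k)*(k*c*(T-c1) - (k+1)*c1*(T-c)) \<ge> 0"
    unfolding step_alg_id[OF assms(1-3)] using assms(4-7) by simp
  then have "k*c*(T-c1) - (k+1)*c1*(T-c) \<ge> 0"
    using assms(6) by (simp add: zero_le_mult_iff)
  then show ?thesis by simp
qed

lemma absorb1: "(real d + 1) * real (m choose (d+1)) = (real m - real d) * real (m choose d)"
proof (cases "d \<le> m")
  case True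
  have "Suc d * (m choose Suc d) = (m - d) * (m choose d)"
    using binomial_absorption[of d m] binomial_absorb_comp[of m d] by simp
  then have "real (Suc d * (m choose Suc d)) = real ((m - d) * (m choose d))" by simp
  then show ?thesis using True by (simp add: of_nat_diff algebra_simps)
next
  case False
  then show ?thesis by (simp add: binomial_eq_0)
qed

lemma absorb2:
  assumes "k < N"
  shows "real (N - k) * real ((N - Suc k) choose d) = (real N - real k - real d) * real ((N - k) choose d)"
proof (cases "d \<le> N - k")
  case True
  have "(N - k - d) * ((N - k) choose d) = (N - k) * ((N - k - 1) choose d)"
    by (rule binomial_absorb_comp)
  then have "real (N - k - d) * real ((N - k) choose d) = real (N - k) * real ((N - k - 1) choose d)"
    by (metis of_nat_mult)
  moreover have "real (N - k - d) = real N - real k - real d" using True assms by (simp add: of_nat_diff)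
  moreover have "real (N - k) = real N - real k" using assms by (simp add: of_nat_diff)
  moreover have "N - k - 1 = N - Suc k" by simp
  ultimately show ?thesis by (simp add: algebra_simps)
next
  case False
  then have "N - Suc k < d" by simp
  then show ?thesis using False by (simp add: binomial_eq_0)
qed

lemma hit_bound: "N choose (d+1) \<le> ((N - k) choose (d+1)) + k * (N choose d)"
proof (induction k)
  case 0 then show ?case by simp
next
  case (Suc k)
  show ?case
  proof (cases "N - k = 0")
    case True
    then have "N - Suc k = 0" by simp
    then show ?thesis using Suc True by simp
  next
    case False
    then have e: "N - k = Suc (N - Suc k)" by simp
    have "(N - k) choose (d+1) = ((N - Suc k) choose d) + ((N - Suc k) choose (d+1))"
      unfolding e by simp
    moreover have "(N - Suc k) choose d \<le> N choose d" by (rule binomial_right_mono) simp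
    ultimately show ?thesis using Suc by simp
  qed
qed

definition Hf :: "nat \<Rightarrow> nat \<Rightarrow> nat \<Rightarrow> real" where
  "Hf N d k = real (N choose d) - real ((N - k) choose d)"

definition gf :: "nat \<Rightarrow> nat \<Rightarrow> nat \<Rightarrow> real" where
  "gf N d k = real k * real ((N - k) choose d) / Hf N d k"

lemma Hf_pos:
  assumes "1 \<le> d" "d \<le> N" "1 \<le> k"
  shows "Hf N d k > 0"
proof -
  have eN: "N = Suc (N - 1)" and ed: "d = Suc (d - 1)" using assms by auto
  have "N choose d = ((N - 1) choose (d - 1)) + ((N - 1) choose d)"
    by (metis binomial_Suc_Suc eN ed)
  then have "real (N choose d) = real ((N - 1) choose (d - 1)) + real ((N - 1) choose d)" by simp
  moreover have "(N - 1) choose (d - 1) > 0" using assms by (intro zero_less_binomial) simp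
  then have "real ((N - 1) choose (d - 1)) > 0" by simp
  moreover have "(N - k) choose d \<le> (N - 1) choose d" using assms by (intro binomial_right_mono) simp
  then have "real ((N - k) choose d) \<le> real ((N - 1) choose d)" by simp
  ultimately show ?thesis unfolding Hf_def by linarith
qed

lemma Hf_mono:
  assumes "k \<le> u"
  shows "Hf N d k \<le> Hf N d u"
  unfolding Hf_def using binomial_right_mono[of "N - u" "N - k" d] assms by simp

lemma gf_step:
  assumes "1 \<le> d" "d + 1 \<le> N" "1 \<le> k" "k + 1 \<le> N"
  shows "gf N d (Suc k) \<le> gf N d k"
proof -
  have H1: "Hf N d k > 0" and H2: "Hf N d (Suc k) > 0" using Hf_pos assms by auto
  have a1: "(real N - real k) * real ((N - Suc k) choose d) = (real N - real k - real d) * real ((N - k) choose d)"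
    using absorb2[of k N d] assms by (simp add: of_nat_diff)
  have a2: "(real d + 1) * real ((N - k) choose (d+1)) = (real N - real k - real d) * real ((N - k) choose d)"
    using absorb1[of d "N - k"] assms by (simp add: of_nat_diff)
  have a3: "(real d + 1) * real (N choose (d+1)) = (real N - real d) * real (N choose d)"
    using absorb1[of d N] by simp
  have a4: "real (N choose (d+1)) \<le> real ((N - k) choose (d+1)) + real k * real (N choose d)"
    using hit_bound[of N d k] by (metis of_nat_add of_nat_le_iff of_nat_mult)
  have "(real k + 1) * real ((N - Suc k) choose d) * (real (N choose d) - real ((N - k) choose d))
      \<le> real k * real ((N - k) choose d) * (real (N choose d) - real ((N - Suc k) choose d))"
    by (rule step_alg[OF a1 a2 a3 a4]) (use assms in auto)
  then have "real (Suc k) * real ((N - Suc k) choose d) * Hf N d k \<le> real k * real ((N - k) choose d) * Hf N d (Suc k)"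
    unfolding Hf_def by (simp add: algebra_simps)
  then show ?thesis unfolding gf_def using H1 H2 by (simp add: divide_simps mult.commute mult.left_commute)
qed

lemma gf_mono:
  assumes "1 \<le> d" "d + 1 \<le> N" "1 \<le> a" "a \<le> u" "u \<le> N"
  shows "gf N d u \<le> gf N d a"
  using assms(4,5)
proof (induction u rule: dec_induct)
  case base then show ?case by simp
next
  case (step u)
  have "gf N d (Suc u) \<le> gf N d u" using gf_step[of d N u] assms step by simp
  also have "\<dots> \<le> gf N d a" using step by simp
  finally show ?case .
qed

lemma rho_formula:
  assumes "1 \<le> d" "d + 1 \<le> N" "1 \<le> k" "k \<le> N"
  shows "Hf N (d+1) k / Hf N d k = ((real N - real d) + gf N d k) / (real d + 1)"
proof -
  have H: "Hf N d k > 0" using Hf_pos assms by auto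
  have a2: "(real d + 1) * real ((N - k) choose (d+1)) = (real N - real k - real d) * real ((N - k) choose d)"
    using absorb1[of d "N - k"] assms by (simp add: of_nat_diff)
  have a3: "(real d + 1) * real (N choose (d+1)) = (real N - real d) * real (N choose d)"
    using absorb1[of d N] by simp
  have "(real d + 1) * Hf N (d+1) k = (real N - real d) * Hf N d k + real k * real ((N - k) choose d)"
    unfolding Hf_def using a2 a3 by (simp add: algebra_simps)
  then have "Hf N (d+1) k = ((real N - real d) * Hf N d k + real k * real ((N - k) choose d)) / (real d + 1)"
    by (simp add: eq_divide_eq mult.commute)
  then have "Hf N (d+1) k / Hf N d k = ((real N - real d) * Hf N d k / Hf N d k + real k * real ((N - k) choose d) / Hf N d k) / (real d + 1)"
    by (simp add: add_divide_distrib)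
  then show ?thesis unfolding gf_def using H by simp
qed

lemma rho_mono:
  assumes "1 \<le> d" "d + 1 \<le> N" "1 \<le> a" "a \<le> u" "u \<le> N"
  shows "Hf N (d+1) u / Hf N d u \<le> Hf N (d+1) a / Hf N d a"
proof -
  have "Hf N (d+1) u / Hf N d u = ((real N - real d) + gf N d u) / (real d + 1)"
    using rho_formula assms by simp
  also have "\<dots> \<le> ((real N - real d) + gf N d a) / (real d + 1)"
    using gf_mono[OF assms] by (intro divide_right_mono) simp_all
  also have "\<dots> = Hf N (d+1) a / Hf N d a"
    using rho_formula assms by simp
  finally show ?thesis .
qed

lemma key_wlog:
  fixes ha hb hu ha' hb' hu' :: real
  assumes pos: "ha > 0" "hb > 0" "ha' > 0" "hb' > 0"
    and le: "ha \<le> hu" "hb \<le> hu"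
    and ra: "hu'/hu \<le> ha'/ha" and rb: "hu'/hu \<le> hb'/hb"
    and ab: "hb'/hb \<le> ha'/ha"
  shows "(ha+hb-hu)/sqrt(ha*hb) \<le> (ha'+hb'-hu')/sqrt(ha'*hb')"
proof -
  define pa where "pa = ha'/ha"
  define pb where "pb = hb'/hb"
  define pu where "pu = hu'/hu"
  define g where "g = sqrt (pa*pb)"
  have hu: "hu > 0" using pos le by linarith
  have pa0: "pa > 0" "pb > 0" unfolding pa_def pb_def using pos by auto
  have e1: "ha' = pa*ha" "hb' = pb*hb" "hu' = pu*hu" unfolding pa_def pb_def pu_def using pos hu by auto
  have g0: "g > 0" unfolding g_def using pa0 by simp
  have gpa: "g \<le> pa"
  proof -
    have "g \<le> sqrt (pa*pa)" unfolding g_def using ab pa0 unfolding pa_def pb_def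
      by (intro real_sqrt_le_mono mult_left_mono) auto
    then show ?thesis using pa0 by simp
  qed
  have gpb: "pb \<le> g"
  proof -
    have "sqrt (pb*pb) \<le> g" unfolding g_def using ab pa0 unfolding pa_def pb_def
      by (intro real_sqrt_le_mono mult_right_mono) auto
    then show ?thesis using pa0 by simp
  qed
  have pub: "pu \<le> pb" using rb unfolding pu_def pb_def .
  have "hu*(g - pu) \<ge> hb*(g - pu)" using le pub gpb by (intro mult_right_mono) auto
  moreover have "ha*(pa - g) \<ge> 0" using pos gpa by simp
  moreover have "hb*pu \<le> hb*pb" using pub pos by (intro mult_left_mono) auto
  ultimately have "ha*(pa - g) + hb*(pb - g) + hu*(g - pu) \<ge> 0"
    by (simp add: algebra_simps)
  then have J: "g*(ha+hb-hu) \<le> ha'+hb'-hu'" unfolding e1 by (simp add: algebra_simps)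
  have sq: "sqrt(ha'*hb') = g * sqrt(ha*hb)"
    unfolding e1 g_def by (simp add: real_sqrt_mult[symmetric] algebra_simps)
  have s0: "sqrt(ha*hb) > 0" using pos by simp
  have "(ha+hb-hu)/sqrt(ha*hb) = g*(ha+hb-hu)/sqrt(ha'*hb')"
    unfolding sq using g0 by simp
  also have "\<dots> \<le> (ha'+hb'-hu')/sqrt(ha'*hb')"
    using J pos by (intro divide_right_mono) auto
  finally show ?thesis .
qed

lemma key:
  fixes ha hb hu ha' hb' hu' :: real
  assumes pos: "ha > 0" "hb > 0" "ha' > 0" "hb' > 0"
    and le: "ha \<le> hu" "hb \<le> hu"
    and ra: "hu'/hu \<le> ha'/ha" and rb: "hu'/hu \<le> hb'/hb"
  shows "(ha+hb-hu)/sqrt(ha*hb) \<le> (ha'+hb'-hu')/sqrt(ha'*hb')"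
proof (cases "hb'/hb \<le> ha'/ha")
  case True
  then show ?thesis using key_wlog[OF assms] by simp
next
  case False
  then have "ha'/ha \<le> hb'/hb" by simp
  from key_wlog[OF pos(2,1,4,3) le(2,1) rb ra this] show ?thesis
    by (simp add: algebra_simps)
qed

lemma supp_pos:
  assumes "boolvec n x" "x \<noteq> (\<lambda>_. 0)"
  shows "1 \<le> card (supp n x)"
proof -
  obtain i where "x i \<noteq> 0" using assms(2) by auto
  then have "i \<in> supp n x" using assms(1) unfolding boolvec_def supp_def by (cases "i < n") auto
  moreover have "finite (supp n x)" using finite_subset[OF supp_sub finite_lessThan] .
  ultimately show ?thesis by (auto simp: card_gt_0_iff Suc_le_eq)
qed

lemma dk_H:
  assumes "boolvec n x" "boolvec n z"
  shows "dkernel n d x z = Hf n d (card (supp n x)) + Hf n d (card (supp n z)) - Hf n d (card (supp n x \<union> supp n z))"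
  unfolding dkernel_formula[OF assms] Hf_def by simp

lemma dk_nonneg: "dkernel n d x z \<ge> 0"
  unfolding dkernel_def heaviside_def by (intro sum_nonneg) auto

lemma nk_diag:
  assumes "boolvec n x" "x \<noteq> (\<lambda>_. 0)" "1 \<le> d" "d \<le> n"
  shows "normalize_kernel (dkernel n d) x x = 1"
proof -
  have "dkernel n d x x = Hf n d (card (supp n x))" using dk_H[OF assms(1,1)] by simp
  moreover have "Hf n d (card (supp n x)) > 0" using Hf_pos supp_pos assms by auto
  ultimately show ?thesis unfolding normalize_kernel_def by simp
qed

lemma nk_mono:
  assumes x: "boolvec n x" "x \<noteq> (\<lambda>_. 0)" and z: "boolvec n z" "z \<noteq> (\<lambda>_. 0)"
    and d: "1 \<le> d" "d + 1 \<le> n"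
  shows "0 \<le> normalize_kernel (dkernel n d) x z \<and>
         normalize_kernel (dkernel n d) x z \<le> normalize_kernel (dkernel n (d+1)) x z"
proof -
  define a where "a = card (supp n x)"
  define b where "b = card (supp n z)"
  define u where "u = card (supp n x \<union> supp n z)"
  have a1: "1 \<le> a" "1 \<le> b" unfolding a_def b_def using supp_pos x z by auto
  have sub: "supp n x \<union> supp n z \<subseteq> {..<n}" using supp_sub by auto
  have fin: "finite (supp n x \<union> supp n z)" using finite_subset[OF sub finite_lessThan] .
  have au: "a \<le> u" "b \<le> u" unfolding a_def b_def u_def using fin by (auto intro: card_mono)
  have un: "u \<le> n" unfolding u_def using card_mono[OF finite_lessThan sub] by simp
  have e: "\<And>d'. normalize_kernel (dkernel n d') x z = (Hf n d' a + Hf n d' b - Hf n d' u) / sqrt (Hf n d' a * Hf n d' b)"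
    unfolding normalize_kernel_def a_def b_def u_def using dk_H x(1) z(1) by simp
  have le1: "normalize_kernel (dkernel n d) x z \<le> normalize_kernel (dkernel n (d+1)) x z"
    unfolding e
  proof (rule key)
    show "Hf n d a > 0" "Hf n d b > 0" using Hf_pos a1 d by auto
    show "Hf n (d+1) a > 0" "Hf n (d+1) b > 0" using Hf_pos[of "d+1" n] a1 d by auto
    show "Hf n d a \<le> Hf n d u" "Hf n d b \<le> Hf n d u" using Hf_mono au by auto
    show "Hf n (d + 1) u / Hf n d u \<le> Hf n (d + 1) a / Hf n d a"
      using rho_mono[OF d a1(1) au(1) un] .
    show "Hf n (d + 1) u / Hf n d u \<le> Hf n (d + 1) b / Hf n d b"
      using rho_mono[OF d a1(2) au(2) un] .
  qed
  have "0 \<le> normalize_kernel (dkernel n d) x z"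
    unfolding normalize_kernel_def using dk_nonneg[of n d] by simp
  with le1 show ?thesis by simp
qed

theorem mainTheorem2:
  fixes n d m :: nat and X :: "nat \<Rightarrow> (nat \<Rightarrow> nat)"
  assumes "1 \<le> d" and "d + 1 \<le> n"
    and "\<And>i. i < m \<Longrightarrow> boolvec n (X i)"
    and "\<And>i. i < m \<Longrightarrow> X i \<noteq> (\<lambda>_. 0)"
  shows "(\<forall>i<m. \<forall>j<m.
            (normalize_kernel (dkernel n d) (X i) (X j))\<^sup>2
              \<le> (normalize_kernel (dkernel n (d+1)) (X i) (X j))\<^sup>2)
       \<and> spectral_ratio m (\<lambda>i j. normalize_kernel (dkernel n d) (X i) (X j))
           \<ge> spectral_ratio m (\<lambda>i j. normalize_kernel (dkernel n (d+1)) (X i) (X j))"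
proof -
  define K where "K i j = normalize_kernel (dkernel n d) (X i) (X j)" for i j
  define K' where "K' i j = normalize_kernel (dkernel n (d+1)) (X i) (X j)" for i j
  have sq: "\<forall>i<m. \<forall>j<m. (K i j)\<^sup>2 \<le> (K' i j)\<^sup>2"
  proof (intro allI impI)
    fix i j assume "i < m" "j < m"
    then have "0 \<le> K i j \<and> K i j \<le> K' i j"
      unfolding K_def K'_def by (intro nk_mono assms(1,2,3,4))
    then show "(K i j)\<^sup>2 \<le> (K' i j)\<^sup>2" by (intro power_mono) auto
  qed
  have dg: "\<And>i. i < m \<Longrightarrow> K i i = 1" "\<And>i. i < m \<Longrightarrow> K' i i = 1"
    unfolding K_def K'_def using nk_diag assms by auto
  have tr: "(\<Sum>i<m. K i i) = real m" "(\<Sum>i<m. K' i i) = real m"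
    using dg by simp_all
  have SS: "(\<Sum>i<m. \<Sum>j<m. (K i j)\<^sup>2) \<le> (\<Sum>i<m. \<Sum>j<m. (K' i j)\<^sup>2)"
    using sq by (intro sum_mono) auto
  have "spectral_ratio m K' \<le> spectral_ratio m K"
  proof (cases "m = 0")
    case True then show ?thesis unfolding spectral_ratio_def by simp
  next
    case False
    then have m0: "0 < m" by simp
    have "(K 0 0)\<^sup>2 \<le> (\<Sum>j<m. (K 0 j)\<^sup>2)"
      using m0 by (intro member_le_sum) auto
    also have "\<dots> \<le> (\<Sum>i<m. \<Sum>j<m. (K i j)\<^sup>2)"
      using m0 by (intro member_le_sum[where f = "\<lambda>i. \<Sum>j<m. (K i j)\<^sup>2"] sum_nonneg) auto
    finally have "1 \<le> (\<Sum>i<m. \<Sum>j<m. (K i j)\<^sup>2)" using dg m0 by simp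
    then have p: "0 < sqrt (\<Sum>i<m. \<Sum>j<m. (K i j)\<^sup>2)" by simp
    have "sqrt (\<Sum>i<m. \<Sum>j<m. (K i j)\<^sup>2) \<le> sqrt (\<Sum>i<m. \<Sum>j<m. (K' i j)\<^sup>2)"
      using SS by simp
    then show ?thesis unfolding spectral_ratio_def tr using p
      by (intro divide_left_mono) auto
  qed
  then show ?thesis using sq unfolding K_def K'_def by simp
qed

end
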